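(* Let $N\ge2$, $U=-e^{2\pi i/N}\begin{pmatrix}1/2&-\sqrt{3}/2\\ \sqrt3/2&1/2\end{pmatrix}$, and $|\psi_i\rangle=(U^i|0\rangle)^{\otimes N}$ for $i=0,1,2$, each with prior $1/3$. With $\alpha=\tfrac13\big(1-(-\tfrac12)^{N-1}\big)$, the optimal minimum-error success probability for this ensemble equals $\big(\sqrt{2/3}\sqrt{1-\alpha}+\sqrt{1/3}\sqrt{\alpha}\big)^2$, which tends to $1$ as $N\to\infty$.
   Context: The optimal minimum-error success probability of an ensemble $\{|\psi_i\rangle,p_i\}_{i=0}^2$ is the maximum over all three-outcome POVMs $\{\Pi_i\}$ on $(\mathbb{C}^2)^{\otimes N}$ of $\sum_ip_i\langle\psi_i|\Pi_i|\psi_i\rangle$. *)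

theory Defs
  imports Complex_Main "Jordan_Normal_Form.Matrix"
begin

definition ket0 :: "complex vec" where
  "ket0 = vec 2 (\<lambda>j. if j = 0 then 1 else 0)"

definition Umat :: "nat \<Rightarrow> complex mat" where
  "Umat N = (- cis (2 * pi / real N)) \<cdot>\<^sub>m
     mat_of_rows_list 2 [[complex_of_real (1/2), complex_of_real (- sqrt 3 / 2)],
                         [complex_of_real (sqrt 3 / 2), complex_of_real (1/2)]]"

text \<open>N-fold tensor power of a qubit vector, as a vector of dimension 2^N in the
  computational basis: the entry at index j is the product over the N qubits k of
  the entry of v at the k-th binary digit of j.\<close>
definition tensor_pow :: "complex vec \<Rightarrow> nat \<Rightarrow> complex vec" where
  "tensor_pow v N = vec (2 ^ N) (\<lambda>j. \<Prod>k<N. v $ ((j div 2 ^ k) mod 2))"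

definition psi :: "nat \<Rightarrow> nat \<Rightarrow> complex vec" where
  "psi N i = tensor_pow ((Umat N ^\<^sub>m i) *\<^sub>v ket0) N"

definition psd :: "nat \<Rightarrow> complex mat \<Rightarrow> bool" where
  "psd d P \<longleftrightarrow> P \<in> carrier_mat d d \<and>
     (\<forall>i<d. \<forall>j<d. P $$ (i, j) = cnj (P $$ (j, i))) \<and>
     (\<forall>v \<in> carrier_vec d. Re (conjugate v \<bullet> (P *\<^sub>v v)) \<ge> 0)"

definition povm3 :: "nat \<Rightarrow> (nat \<Rightarrow> complex mat) \<Rightarrow> bool" where
  "povm3 d M \<longleftrightarrow> (\<forall>i<3. psd d (M i)) \<and> M 0 + M 1 + M 2 = 1\<^sub>m d"

text \<open>Success probability sum_i p_i <psi_i|Pi_i|psi_i> (real since Pi_i is PSD).\<close>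
definition success :: "(nat \<Rightarrow> real) \<Rightarrow> (nat \<Rightarrow> complex vec) \<Rightarrow> (nat \<Rightarrow> complex mat) \<Rightarrow> real" where
  "success p \<psi> M = (\<Sum>i<3. p i * Re (conjugate (\<psi> i) \<bullet> (M i *\<^sub>v \<psi> i)))"

definition opt_success :: "nat \<Rightarrow> (nat \<Rightarrow> real) \<Rightarrow> (nat \<Rightarrow> complex vec) \<Rightarrow> real" where
  "opt_success N p \<psi> = (SUP M \<in> {M. povm3 (2 ^ N) M}. success p \<psi> M)"

end

theory Submission
  imports Defs
begin


definition ip :: "complex vec \<Rightarrow> complex vec \<Rightarrow> complex" where
  "ip v w = conjugate v \<bullet> w"

lemma ip_sum: "dim_vec w = n \<Longrightarrow> dim_vec v = n \<Longrightarrow> ip v w = (\<Sum>i<n. cnj (v$i) * w$i)"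
  unfolding ip_def scalar_prod_def conjugate_vec_def by (auto intro!: sum.cong)

lemma ip_add_left: "v \<in> carrier_vec n \<Longrightarrow> w \<in> carrier_vec n \<Longrightarrow> u \<in> carrier_vec n \<Longrightarrow>
   ip (v + w) u = ip v u + ip w u"
  by (simp add: ip_sum[of _ n] sum.distrib algebra_simps)
lemma ip_add_right: "v \<in> carrier_vec n \<Longrightarrow> w \<in> carrier_vec n \<Longrightarrow> u \<in> carrier_vec n \<Longrightarrow>
   ip u (v + w) = ip u v + ip u w"
  by (simp add: ip_sum[of _ n] sum.distrib algebra_simps)
lemma ip_smult_left: "v \<in> carrier_vec n \<Longrightarrow> u \<in> carrier_vec n \<Longrightarrow>
   ip (c \<cdot>\<^sub>v v) u = cnj c * ip v u"
  by (simp add: ip_sum[of _ n] sum_distrib_left algebra_simps)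
lemma ip_smult_right: "v \<in> carrier_vec n \<Longrightarrow> u \<in> carrier_vec n \<Longrightarrow>
   ip u (c \<cdot>\<^sub>v v) = c * ip u v"
  by (simp add: ip_sum[of _ n] sum_distrib_left algebra_simps)
lemma ip_cnj: "v \<in> carrier_vec n \<Longrightarrow> u \<in> carrier_vec n \<Longrightarrow> ip u v = cnj (ip v u)"
  by (simp add: ip_sum[of _ n] algebra_simps)
lemma ip_self_Re: "v \<in> carrier_vec n \<Longrightarrow> Re (ip v v) \<ge> 0"
  by (simp add: ip_sum[of _ n] sum_nonneg)

lemmas ip_lin = ip_add_left ip_add_right ip_smult_left ip_smult_right


lemma qform_expand:
  assumes P: "P \<in> carrier_mat n n" and x: "x \<in> carrier_vec n" and y: "y \<in> carrier_vec n"
  shows "ip (a \<cdot>\<^sub>v x + b \<cdot>\<^sub>v y) (P *\<^sub>v (a \<cdot>\<^sub>v x + b \<cdot>\<^sub>v y)) =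
     cnj a * a * ip x (P *\<^sub>v x) + cnj b * b * ip y (P *\<^sub>v y) + cnj a * b * ip x (P *\<^sub>v y) + cnj b * a * ip y (P *\<^sub>v x)"
proof -
  have Px: "P *\<^sub>v x \<in> carrier_vec n" and Py: "P *\<^sub>v y \<in> carrier_vec n" using P x y by auto
  have "P *\<^sub>v (a \<cdot>\<^sub>v x + b \<cdot>\<^sub>v y) = a \<cdot>\<^sub>v (P *\<^sub>v x) + b \<cdot>\<^sub>v (P *\<^sub>v y)"
    using P x y by (simp add: mult_add_distrib_mat_vec mult_mat_vec)
  then show ?thesis using x y Px Py
    by (simp add: ip_lin[of _ n] algebra_simps)
qed

lemma qconv:
  assumes P: "P \<in> carrier_mat n n" and x: "x \<in> carrier_vec n" and y: "y \<in> carrier_vec n"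
    and pos: "\<forall>v\<in>carrier_vec n. Re (ip v (P *\<^sub>v v)) \<ge> 0"
    and w1: "w1 > 0" and w2: "w2 > 0"
  shows "Re (ip (x+y) (P *\<^sub>v (x+y))) \<le> (w1+w2) * (Re (ip x (P *\<^sub>v x)) / w1 + Re (ip y (P *\<^sub>v y)) / w2)"
proof -
  define z where "z = complex_of_real w2 \<cdot>\<^sub>v x + complex_of_real (- w1) \<cdot>\<^sub>v y"
  have "z \<in> carrier_vec n" using x y by (simp add: z_def)
  hence h: "Re (ip z (P *\<^sub>v z)) \<ge> 0" using pos by auto
  have e1: "ip z (P *\<^sub>v z) = w2*w2 * ip x (P *\<^sub>v x) + w1*w1 * ip y (P *\<^sub>v y) - w1*w2 * (ip x (P *\<^sub>v y) + ip y (P *\<^sub>v x))"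
    unfolding z_def qform_expand[OF P x y] by (simp add: algebra_simps)
  have e2: "ip (x+y) (P *\<^sub>v (x+y)) = ip x (P *\<^sub>v x) + ip y (P *\<^sub>v y) + (ip x (P *\<^sub>v y) + ip y (P *\<^sub>v x))"
    using qform_expand[OF P x y, of 1 1] by simp
  define qx where "qx = Re (ip x (P *\<^sub>v x))"
  define qy where "qy = Re (ip y (P *\<^sub>v y))"
  define R where "R = Re (ip x (P *\<^sub>v y) + ip y (P *\<^sub>v x))"
  have h': "w2*w2*qx + w1*w1*qy - w1*w2*R \<ge> 0" using h unfolding e1 qx_def qy_def R_def by simp
  have "qx + qy + R \<le> (w1+w2) * (qx/w1 + qy/w2)"
  proof -
    have "(w1+w2) * (qx/w1 + qy/w2) - (qx + qy + R) = (w2*w2*qx + w1*w1*qy - w1*w2*R) / (w1*w2)"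
      using w1 w2 by (simp add: field_simps)
    also have "\<dots> \<ge> 0" using h' w1 w2 by simp
    finally show ?thesis by simp
  qed
  thus ?thesis unfolding e2 qx_def qy_def R_def by simp
qed

lemma qscale:
  assumes P: "P \<in> carrier_mat n n" and x: "x \<in> carrier_vec n"
  shows "Re (ip (c \<cdot>\<^sub>v x) (P *\<^sub>v (c \<cdot>\<^sub>v x))) = (cmod c)^2 * Re (ip x (P *\<^sub>v x))"
proof -
  have "ip (c \<cdot>\<^sub>v x) (P *\<^sub>v (c \<cdot>\<^sub>v x)) = (cnj c * c) * ip x (P *\<^sub>v x)"
    using P x by (simp add: mult_mat_vec ip_lin[of _ n])
  moreover have "cnj c * c = complex_of_real ((cmod c)^2)"
    using complex_norm_square[of c] by (simp add: mult.commute)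
  ultimately show ?thesis by simp
qed

lemma qconv3:
  assumes P: "P \<in> carrier_mat n n" and x: "x0 \<in> carrier_vec n" "x1 \<in> carrier_vec n" "x2 \<in> carrier_vec n"
    and pos: "\<forall>v\<in>carrier_vec n. Re (ip v (P *\<^sub>v v)) \<ge> 0"
    and w: "w0 > 0" "w1 > 0" "w2 > 0"
  shows "Re (ip (x0+x1+x2) (P *\<^sub>v (x0+x1+x2))) \<le> (w0+w1+w2) *
     (Re (ip x0 (P *\<^sub>v x0)) / w0 + Re (ip x1 (P *\<^sub>v x1)) / w1 + Re (ip x2 (P *\<^sub>v x2)) / w2)"
proof -
  have s: "x0+x1+x2 = x0 + (x1+x2)" using x by auto
  have a: "Re (ip (x0+(x1+x2)) (P *\<^sub>v (x0+(x1+x2)))) \<le> (w0+(w1+w2)) *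
     (Re (ip x0 (P *\<^sub>v x0)) / w0 + Re (ip (x1+x2) (P *\<^sub>v (x1+x2))) / (w1+w2))"
    using qconv[OF P x(1) _ pos w(1), of "x1+x2" "w1+w2"] x w by auto
  have b: "Re (ip (x1+x2) (P *\<^sub>v (x1+x2))) \<le> (w1+w2) * (Re (ip x1 (P *\<^sub>v x1)) / w1 + Re (ip x2 (P *\<^sub>v x2)) / w2)"
    using qconv[OF P x(2) x(3) pos w(2) w(3)] .
  have "Re (ip (x1+x2) (P *\<^sub>v (x1+x2))) / (w1+w2) \<le> Re (ip x1 (P *\<^sub>v x1)) / w1 + Re (ip x2 (P *\<^sub>v x2)) / w2"
    using b w by (simp add: divide_le_eq mult.commute)
  hence "(w0+(w1+w2)) * (Re (ip x0 (P *\<^sub>v x0)) / w0 + Re (ip (x1+x2) (P *\<^sub>v (x1+x2))) / (w1+w2))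
     \<le> (w0+(w1+w2)) * (Re (ip x0 (P *\<^sub>v x0)) / w0 + (Re (ip x1 (P *\<^sub>v x1)) / w1 + Re (ip x2 (P *\<^sub>v x2)) / w2))"
    using w by (intro mult_left_mono) auto
  with a s show ?thesis by (simp add: add.assoc)
qed


definition om :: complex where "om = Complex (-1/2) (sqrt 3 / 2)"

lemma om_sq: "om * om = -1 - om"
  by (simp add: om_def complex_eq_iff)
lemma om_sq2: "om * (om * x) = (-1-om)*x"
  using om_sq by (simp add: mult.assoc[symmetric])
lemmas omr = om_sq om_sq2
lemma om_cnj: "cnj om = -1 - om"
  by (simp add: om_def complex_eq_iff)
lemma om_norm: "cmod om = 1"
  by (simp add: om_def cmod_def power_divide)

lemma vec_eq3:
  fixes p0 p1 p2 :: "complex vec"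
  assumes c: "p0 \<in> carrier_vec d" "p1 \<in> carrier_vec d" "p2 \<in> carrier_vec d"
  assumes "\<And>x y z. a0 * x + a1 * y + a2 * z = b0 * x + b1 * y + b2 * z"
  shows "a0 \<cdot>\<^sub>v p0 + a1 \<cdot>\<^sub>v p1 + a2 \<cdot>\<^sub>v p2 = b0 \<cdot>\<^sub>v p0 + b1 \<cdot>\<^sub>v p1 + b2 \<cdot>\<^sub>v p2"
  using c by (intro eq_vecI) (auto simp: add.assoc[symmetric] assms(4))


locale gram3 =
  fixes d :: nat and p0 p1 p2 :: "complex vec" and c :: real
  assumes carr: "p0 \<in> carrier_vec d" "p1 \<in> carrier_vec d" "p2 \<in> carrier_vec d"
  and g: "ip p0 p0 = 1" "ip p1 p1 = 1" "ip p2 p2 = 1"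
     "ip p0 p1 = of_real c" "ip p1 p0 = of_real c" "ip p0 p2 = of_real c"
     "ip p2 p0 = of_real c" "ip p1 p2 = of_real c" "ip p2 p1 = of_real c"
  and crange: "-1/2 < c" "c < 1"
begin

definition "E0 = p0 + p1 + p2"
definition "E1 = p0 + cnj om \<cdot>\<^sub>v p1 + om \<cdot>\<^sub>v p2"
definition "E2 = p0 + om \<cdot>\<^sub>v p1 + cnj om \<cdot>\<^sub>v p2"

lemma E_carr: "E0 \<in> carrier_vec d" "E1 \<in> carrier_vec d" "E2 \<in> carrier_vec d"
  using carr by (auto simp: E0_def E1_def E2_def)

lemma dec0: "p0 = (1/3) \<cdot>\<^sub>v E0 + (1/3) \<cdot>\<^sub>v E1 + (1/3) \<cdot>\<^sub>v E2"
  apply (intro eq_vecI)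
  using carr apply (simp_all add: E0_def E1_def E2_def om_cnj)
  apply (simp add: field_simps omr) apply (simp add: algebra_simps omr)?
  done
lemma dec1: "p1 = (1/3) \<cdot>\<^sub>v E0 + (om/3) \<cdot>\<^sub>v E1 + (cnj om/3) \<cdot>\<^sub>v E2"
  apply (intro eq_vecI)
  using carr apply (simp_all add: E0_def E1_def E2_def om_cnj)
  apply (simp add: field_simps omr) apply (simp add: algebra_simps omr)?
  done
lemma dec2: "p2 = (1/3) \<cdot>\<^sub>v E0 + (cnj om/3) \<cdot>\<^sub>v E1 + (om/3) \<cdot>\<^sub>v E2"
  apply (intro eq_vecI)
  using carr apply (simp_all add: E0_def E1_def E2_def om_cnj)
  apply (simp add: field_simps omr) apply (simp add: algebra_simps omr)?
  done

lemmas ipl = ip_lin[of _ d]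

lemma ipE: 
  "ip E0 E0 = 3 + 6 * of_real c" "ip E1 E1 = 3 - 3 * of_real c" "ip E2 E2 = 3 - 3 * of_real c"
  "ip E0 E1 = 0" "ip E1 E0 = 0" "ip E0 E2 = 0" "ip E2 E0 = 0" "ip E1 E2 = 0" "ip E2 E1 = 0"
  using carr unfolding E0_def E1_def E2_def
  by (simp_all add: ipl E_carr carr g om_cnj; simp add: algebra_simps omr)+

lemma ipEp:
  "ip E0 p0 = 1 + 2 * of_real c" "ip E0 p1 = 1 + 2 * of_real c" "ip E0 p2 = 1 + 2 * of_real c"
  "ip E1 p0 = 1 - of_real c" "ip E1 p1 = om * (1 - of_real c)" "ip E1 p2 = cnj om * (1 - of_real c)"
  "ip E2 p0 = 1 - of_real c" "ip E2 p1 = cnj om * (1 - of_real c)" "ip E2 p2 = om * (1 - of_real c)"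
  using carr unfolding E0_def E1_def E2_def
  by (simp_all add: ipl E_carr carr g om_cnj; simp add: algebra_simps omr)+

end


definition qf :: "complex mat \<Rightarrow> complex vec \<Rightarrow> real" where
  "qf P v = Re (ip v (P *\<^sub>v v))"

lemma psd_pos: "psd d P \<Longrightarrow> \<forall>v\<in>carrier_vec d. Re (ip v (P *\<^sub>v v)) \<ge> 0"
  unfolding psd_def ip_def by auto

lemma sum3_q:
  assumes M: "povm3 d M" and v: "v \<in> carrier_vec d"
  shows "qf (M 0) v + qf (M 1) v + qf (M 2) v = Re (ip v v)"
proof -
  have c: "M i \<in> carrier_mat d d" if "i < 3" for i using M that unfolding povm3_def psd_def by auto
  have "M 0 *\<^sub>v v + M 1 *\<^sub>v v + M 2 *\<^sub>v v = (M 0 + M 1 + M 2) *\<^sub>v v"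
    using c[of 0] c[of 1] c[of 2] v
    by (subst add_mult_distrib_mat_vec[of _ d d], auto simp: add_mult_distrib_mat_vec)
  also have "\<dots> = v" using M v unfolding povm3_def by simp
  finally have e: "M 0 *\<^sub>v v + M 1 *\<^sub>v v + M 2 *\<^sub>v v = v" .
  have "ip v v = ip v (M 0 *\<^sub>v v) + ip v (M 1 *\<^sub>v v) + ip v (M 2 *\<^sub>v v)"
    apply (subst (2) e[symmetric])
    using c[of 0] c[of 1] c[of 2] v by (simp add: ip_lin[of _ d])
  thus ?thesis unfolding qf_def by simp
qed

context gram3 begin

definition "AA = sqrt (1 + 2*c)"
definition "BB = sqrt (1 - c)"

lemma AB_pos: "AA > 0" "BB > 0" using crange by (auto simp: AA_def BB_def)
lemma AB_sq: "AA^2 = 1 + 2*c" "BB^2 = 1 - c" using crange by (auto simp: AA_def BB_def)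

lemma bound_gen:
  assumes P: "psd d P" and a: "cmod a = 1/3" "cmod b = 1/3" "cmod e = 1/3"
  shows "qf P (a \<cdot>\<^sub>v E0 + b \<cdot>\<^sub>v E1 + e \<cdot>\<^sub>v E2) \<le>
     (AA + 2*BB) * (qf P E0 / (9*AA) + qf P E1 / (9*BB) + qf P E2 / (9*BB))"
proof -
  have Pc: "P \<in> carrier_mat d d" using P unfolding psd_def by auto
  have "qf P (a \<cdot>\<^sub>v E0 + b \<cdot>\<^sub>v E1 + e \<cdot>\<^sub>v E2) \<le> (AA + BB + BB) *
     (qf P (a \<cdot>\<^sub>v E0) / AA + qf P (b \<cdot>\<^sub>v E1) / BB + qf P (e \<cdot>\<^sub>v E2) / BB)"
    unfolding qf_def using E_carr
    by (intro qconv3[OF Pc _ _ _ psd_pos[OF P]] AB_pos) auto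
  also have "\<dots> = (AA + 2*BB) * (qf P E0 / (9*AA) + qf P E1 / (9*BB) + qf P E2 / (9*BB))"
  proof -
    have h: "qf P (a \<cdot>\<^sub>v E0) = qf P E0 / 9" "qf P (b \<cdot>\<^sub>v E1) = qf P E1 / 9" "qf P (e \<cdot>\<^sub>v E2) = qf P E2 / 9"
      unfolding qf_def using qscale[OF Pc, of E0 a] qscale[OF Pc, of E1 b] qscale[OF Pc, of E2 e] E_carr a
      by (simp_all add: power2_eq_square)
    show ?thesis unfolding h using AB_pos by (simp add: field_simps)
  qed
  finally show ?thesis .
qed

lemma cm: "cmod (1/3) = 1/3" "cmod (om/3) = 1/3" "cmod (cnj om / 3) = 1/3"
  using om_norm by (simp_all add: norm_divide)

lemma upper:
  assumes M: "povm3 d M" and psi: "\<psi> 0 = p0" "\<psi> 1 = p1" "\<psi> 2 = p2"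
  shows "success (\<lambda>_. 1/3) \<psi> M \<le> (AA + 2*BB)^2 / 9"
proof -
  have P: "psd d (M i)" if "i<3" for i using M that unfolding povm3_def by auto
  define S where "S = (\<lambda>i. qf (M i) E0 / (9*AA) + qf (M i) E1 / (9*BB) + qf (M i) E2 / (9*BB))"
  have b0: "qf (M 0) p0 \<le> (AA + 2*BB) * S 0"
    unfolding S_def by (subst dec0) (rule bound_gen[OF P]; simp add: cm om_norm norm_divide)
  have b1: "qf (M 1) p1 \<le> (AA + 2*BB) * S 1"
    unfolding S_def by (subst dec1) (rule bound_gen[OF P]; simp add: cm om_norm norm_divide)
  have b2: "qf (M 2) p2 \<le> (AA + 2*BB) * S 2"
    unfolding S_def by (subst dec2) (rule bound_gen[OF P]; simp add: cm om_norm norm_divide)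
  have "S 0 + S 1 + S 2 = (qf (M 0) E0 + qf (M 1) E0 + qf (M 2) E0) / (9*AA)
     + (qf (M 0) E1 + qf (M 1) E1 + qf (M 2) E1) / (9*BB) + (qf (M 0) E2 + qf (M 1) E2 + qf (M 2) E2) / (9*BB)"
    unfolding S_def by (simp add: add_divide_distrib)
  also have "\<dots> = (3 + 6*c) / (9*AA) + (3 - 3*c)/(9*BB) + (3 - 3*c)/(9*BB)"
    using sum3_q[OF M] E_carr by (simp add: ipE)
  also have "\<dots> = 3*AA^2 / (9*AA) + 3*BB^2/(9*BB) + 3*BB^2/(9*BB)"
    using AB_sq by simp
  also have "\<dots> = (AA + 2*BB) / 3"
    using AB_pos by (simp add: field_simps power2_eq_square)
  finally have Ssum: "S 0 + S 1 + S 2 = (AA + 2*BB) / 3" .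
  have "success (\<lambda>_. 1/3) \<psi> M = (qf (M 0) p0 + qf (M 1) p1 + qf (M 2) p2) / 3"
  proof -
    have "{..<3::nat} = {0,1,2}" by auto
    moreover have "\<psi> (Suc 0) = p1" using psi(2) by simp
    ultimately show ?thesis unfolding success_def qf_def ip_def by (simp add: psi)
  qed
  also have "\<dots> \<le> ((AA + 2*BB) * S 0 + (AA + 2*BB) * S 1 + (AA + 2*BB) * S 2) / 3"
    by (intro divide_right_mono add_mono b0 b1 b2) simp
  also have "\<dots> = (AA + 2*BB) * (S 0 + S 1 + S 2) / 3"
    by (simp only: distrib_left)
  also have "\<dots> = (AA + 2*BB)^2 / 9"
    unfolding Ssum by (simp add: power2_eq_square)
  finally show ?thesis .
qed

end


definition rk1 :: "nat \<Rightarrow> complex vec \<Rightarrow> complex mat" where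
  "rk1 n a = mat n n (\<lambda>(r,s). a$r * cnj (a$s))"
definition comp2 :: "nat \<Rightarrow> complex vec \<Rightarrow> complex vec \<Rightarrow> complex mat" where
  "comp2 n a b = mat n n (\<lambda>(r,s). (if r = s then 1 else 0) - a$r * cnj (a$s) - b$r * cnj (b$s))"

lemma rk1_mult: assumes "a \<in> carrier_vec n" "v \<in> carrier_vec n"
  shows "rk1 n a *\<^sub>v v = ip a v \<cdot>\<^sub>v a"
  apply (rule eq_vecI)
  using assms by (auto simp: rk1_def ip_sum[of _ n] scalar_prod_def sum_distrib_left algebra_simps intro!: sum.cong)

lemma comp2_mult: assumes "a \<in> carrier_vec n" "b \<in> carrier_vec n" "v \<in> carrier_vec n"
  shows "comp2 n a b *\<^sub>v v = v + (- ip a v) \<cdot>\<^sub>v a + (- ip b v) \<cdot>\<^sub>v b"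
proof (rule eq_vecI)
  fix i assume i: "i < dim_vec (v + (- ip a v) \<cdot>\<^sub>v a + (- ip b v) \<cdot>\<^sub>v b)"
  hence i': "i < n" using assms by simp
  have "(comp2 n a b *\<^sub>v v) $ i = (\<Sum>s<n. ((if i = s then 1 else 0) - a$i * cnj (a$s) - b$i * cnj (b$s)) * v$s)"
    using assms i' by (auto simp: comp2_def scalar_prod_def intro!: sum.cong)
  also have "\<dots> = (\<Sum>s<n. (if i = s then v$s else 0)) - a$i * (\<Sum>s<n. cnj (a$s) * v$s) - b$i * (\<Sum>s<n. cnj (b$s) * v$s)"
  proof -
    have "(\<Sum>s<n. ((if i = s then 1 else 0) - a$i * cnj (a$s) - b$i * cnj (b$s)) * v$s)
       = (\<Sum>s<n. (if i = s then v$s else 0)) - (\<Sum>s<n. a$i * (cnj (a$s) * v$s)) - (\<Sum>s<n. b$i * (cnj (b$s) * v$s))"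
      by (subst sum_subtractf[symmetric])+ (rule sum.cong, auto simp: algebra_simps)
    thus ?thesis by (simp only: sum_distrib_left[symmetric])
  qed
  also have "\<dots> = v$i - a$i * ip a v - b$i * ip b v"
    using assms i' by (simp add: ip_sum[of _ n])
  finally show "(comp2 n a b *\<^sub>v v) $ i = (v + (- ip a v) \<cdot>\<^sub>v a + (- ip b v) \<cdot>\<^sub>v b) $ i"
    using assms i' by simp
qed (use assms in \<open>auto simp: comp2_def\<close>)

lemma rk1_psd: assumes a: "a \<in> carrier_vec n" shows "psd n (rk1 n a)"
  unfolding psd_def
proof (intro conjI allI impI ballI)
  show "rk1 n a \<in> carrier_mat n n" by (simp add: rk1_def)
  fix i j assume "i < n" "j < n"
  thus "rk1 n a $$ (i, j) = cnj (rk1 n a $$ (j, i))" by (simp add: rk1_def)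
next
  fix v :: "complex vec" assume v: "v \<in> carrier_vec n"
  have "conjugate v \<bullet> (rk1 n a *\<^sub>v v) = ip a v * cnj (ip a v)"
    using a v by (simp add: rk1_mult ip_def[symmetric] ip_smult_right[of _ n] ip_cnj[of a n v])
  also have "\<dots> = of_real ((cmod (ip a v))^2)" by (rule complex_norm_square[symmetric])
  finally show "0 \<le> Re (conjugate v \<bullet> (rk1 n a *\<^sub>v v))" by simp
qed

lemma comp2_psd: assumes a: "a \<in> carrier_vec n" and b: "b \<in> carrier_vec n"
  and o: "ip a a = 1" "ip b b = 1" "ip a b = 0"
  shows "psd n (comp2 n a b)"
  unfolding psd_def
proof (intro conjI allI impI ballI)
  show "comp2 n a b \<in> carrier_mat n n" by (simp add: comp2_def)
  fix i j assume "i < n" "j < n"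
  thus "comp2 n a b $$ (i, j) = cnj (comp2 n a b $$ (j, i))" by (simp add: comp2_def)
next
  fix v :: "complex vec" assume v: "v \<in> carrier_vec n"
  have oba: "ip b a = 0" using o(3) ip_cnj[OF a b] by simp
  define r where "r = v + (- ip a v) \<cdot>\<^sub>v a + (- ip b v) \<cdot>\<^sub>v b"
  have rc: "r \<in> carrier_vec n" using a b v by (simp add: r_def)
  have va: "ip v a = cnj (ip a v)" "ip v b = cnj (ip b v)" using ip_cnj a b v by blast+
  have e1: "conjugate v \<bullet> (comp2 n a b *\<^sub>v v) = ip v r"
    using a b v by (simp add: comp2_mult ip_def r_def)
  have "ip r r = ip v r" unfolding r_def using a b v
    by (simp add: ip_lin[of _ n] o oba va algebra_simps)
  thus "0 \<le> Re (conjugate v \<bullet> (comp2 n a b *\<^sub>v v))" using e1 ip_self_Re[OF rc] by simp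
qed

lemma povm_sum: assumes "a \<in> carrier_vec n" "b \<in> carrier_vec n"
  shows "comp2 n a b + rk1 n a + rk1 n b = 1\<^sub>m n"
  by (rule eq_matI) (auto simp: comp2_def rk1_def)


context gram3 begin

definition "ca = complex_of_real AA"
definition "cb = complex_of_real BB"

lemma cf: "ca \<noteq> 0" "cb \<noteq> 0" "cnj ca = ca" "cnj cb = cb" "complex_of_real c = 1 - cb*cb"
   "ca * ca = 3 - 2*cb*cb"
proof -
  show "ca \<noteq> 0" "cb \<noteq> 0" using AB_pos by (auto simp: ca_def cb_def)
  show "cnj ca = ca" "cnj cb = cb" by (auto simp: ca_def cb_def)
  have h1: "c = 1 - BB*BB" "AA*AA = 3 - 2*BB*BB" using AB_sq by (auto simp: power2_eq_square)
  have "complex_of_real c = complex_of_real (1 - BB*BB)" using h1(1) by simp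
  thus "complex_of_real c = 1 - cb*cb" unfolding cb_def by simp
  have "complex_of_real (AA*AA) = complex_of_real (3 - 2*BB*BB)" using h1(2) by simp
  thus "ca * ca = 3 - 2*cb*cb" unfolding ca_def cb_def by simp
qed

definition "phi1 = (1/(3*ca)) \<cdot>\<^sub>v E0 + (om/(3*cb)) \<cdot>\<^sub>v E1 + (cnj om/(3*cb)) \<cdot>\<^sub>v E2"
definition "phi2 = (1/(3*ca)) \<cdot>\<^sub>v E0 + (cnj om/(3*cb)) \<cdot>\<^sub>v E1 + (om/(3*cb)) \<cdot>\<^sub>v E2"

lemma phi_carr: "phi1 \<in> carrier_vec d" "phi2 \<in> carrier_vec d"
  using E_carr by (auto simp: phi1_def phi2_def)

lemmas cf5 = cf(1-5)

lemma caq: "ca * ca = 3 - 2*cb*cb" "ca * (ca * x) = (3 - 2*cb*cb) * x"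
  using cf(6) by (auto simp: mult.assoc[symmetric])

lemma ipphi1: "ip phi1 phi1 = 1"
  unfolding phi1_def phi2_def using E_carr carr
  by (simp add: ipl ipE ipEp cf5 om_cnj, simp add: field_simps cf5, simp add: algebra_simps omr caq)

lemma ipphi2: "ip phi2 phi2 = 1"
  unfolding phi1_def phi2_def using E_carr carr
  by (simp add: ipl ipE ipEp cf5 om_cnj, simp add: field_simps cf5, simp add: algebra_simps omr caq)

lemma ipphi12: "ip phi1 phi2 = 0"
  unfolding phi1_def phi2_def using E_carr carr
  by (simp add: ipl ipE ipEp cf5 om_cnj, simp add: field_simps cf5, simp add: algebra_simps omr caq)

lemma v11: "ip phi1 p1 = (ca + 2*cb)/3"
  unfolding phi1_def phi2_def using E_carr carr
  by (simp add: ipl ipE ipEp cf5 om_cnj, simp add: field_simps cf5, simp add: algebra_simps omr caq)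

lemma v22: "ip phi2 p2 = (ca + 2*cb)/3"
  unfolding phi1_def phi2_def using E_carr carr
  by (simp add: ipl ipE ipEp cf5 om_cnj, simp add: field_simps cf5, simp add: algebra_simps omr caq)

lemma v10: "ip phi1 p0 = (ca - cb)/3"
  unfolding phi1_def phi2_def using E_carr carr
  by (simp add: ipl ipE ipEp cf5 om_cnj, simp add: field_simps cf5, simp add: algebra_simps omr caq)

lemma v20: "ip phi2 p0 = (ca - cb)/3"
  unfolding phi1_def phi2_def using E_carr carr
  by (simp add: ipl ipE ipEp cf5 om_cnj, simp add: field_simps cf5, simp add: algebra_simps omr caq)

definition Mopt :: "nat \<Rightarrow> complex mat" where "Mopt = (\<lambda>i. if i = 0 then comp2 d phi1 phi2 else if i = 1 then rk1 d phi1 else rk1 d phi2)"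

lemma Mopt_povm: "povm3 d Mopt"
proof -
  have "psd d (Mopt i)" if "i < 3" for i
  proof -
    have "i = 0 \<or> i = 1 \<or> i = 2" using that by auto
    thus ?thesis using phi_carr ipphi1 ipphi2 ipphi12
      by (auto simp: Mopt_def intro: rk1_psd comp2_psd)
  qed
  moreover have "Mopt 0 + Mopt 1 + Mopt 2 = 1\<^sub>m d"
    using povm_sum[OF phi_carr] by (simp add: Mopt_def)
  ultimately show ?thesis unfolding povm3_def by auto
qed

lemma Mopt_success: assumes psi: "\<psi> 0 = p0" "\<psi> 1 = p1" "\<psi> 2 = p2"
  shows "success (\<lambda>_. 1/3) \<psi> Mopt = (AA + 2*BB)^2/9"
proof -
  have c10: "ip p0 phi1 = (ca - cb)/3" "ip p0 phi2 = (ca - cb)/3"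
    "ip p1 phi1 = (ca + 2*cb)/3" "ip p2 phi2 = (ca + 2*cb)/3"
    using ip_cnj[OF phi_carr(1) carr(1)] ip_cnj[OF phi_carr(2) carr(1)]
      ip_cnj[OF phi_carr(1) carr(2)] ip_cnj[OF phi_carr(2) carr(3)]
    by (simp_all add: v10 v20 v11 v22 cf5)
  have e0: "ip p0 (Mopt 0 *\<^sub>v p0) = 1 - 2*((ca-cb)/3)*((ca-cb)/3)"
    unfolding Mopt_def using phi_carr carr
    by (simp add: comp2_mult ipl g c10 v10 v20)
  have e1: "ip p1 (Mopt 1 *\<^sub>v p1) = ((ca+2*cb)/3)*((ca+2*cb)/3)"
    unfolding Mopt_def using phi_carr carr
    by (simp add: rk1_mult ipl c10 v11)
  have e2: "ip p2 (Mopt 2 *\<^sub>v p2) = ((ca+2*cb)/3)*((ca+2*cb)/3)"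
    unfolding Mopt_def using phi_carr carr
    by (simp add: rk1_mult ipl c10 v22)
  have "{..<3::nat} = {0,1,2}" by auto
  moreover have "\<psi> (Suc 0) = p1" using psi(2) by simp
  ultimately have "success (\<lambda>_. 1/3) \<psi> Mopt = (Re (ip p0 (Mopt 0 *\<^sub>v p0)) + Re (ip p1 (Mopt 1 *\<^sub>v p1))
     + Re (ip p2 (Mopt 2 *\<^sub>v p2))) / 3"
    unfolding success_def ip_def by (simp add: psi)
  also have "\<dots> = (1 - 2*((AA-BB)/3)*((AA-BB)/3) + 2*(((AA+2*BB)/3)*((AA+2*BB)/3))) / 3"
  proof -
    have "1 - 2*((ca-cb)/3)*((ca-cb)/3) = complex_of_real (1 - 2*((AA-BB)/3)*((AA-BB)/3))"
      "((ca+2*cb)/3)*((ca+2*cb)/3) = complex_of_real (((AA+2*BB)/3)*((AA+2*BB)/3))"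
      by (simp_all add: ca_def cb_def)
    thus ?thesis unfolding e0 e1 e2 by (simp only: Re_complex_of_real) simp
  qed
  also have "\<dots> = (AA + 2*BB)^2/9"
  proof -
    have h: "AA*AA + 2*(BB*BB) = 3" using AB_sq by (simp add: power2_eq_square)
    have "(1 - 2*((AA-BB)/3)*((AA-BB)/3) + 2*(((AA+2*BB)/3)*((AA+2*BB)/3))) / 3 - (AA+2*BB)^2/9
       = (3 - (AA*AA + 2*(BB*BB)))/9"
      by (simp add: field_simps power2_eq_square algebra_simps)
    thus ?thesis unfolding h by simp
  qed
  finally show ?thesis .
qed

end


lemma sum_double: "(\<Sum>j<2*m. f j) = (\<Sum>j<m. f j) + (\<Sum>j<m. f (j + m)) " for f :: "nat \<Rightarrow> 'a::comm_monoid_add"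
proof -
  have e: "{..<2*m} = {..<m} \<union> {m..<2*m}" by auto
  have "(\<Sum>j<2*m. f j) = (\<Sum>j<m. f j) + (\<Sum>j\<in>{m..<2*m}. f j)"
    unfolding e by (rule sum.union_disjoint) auto
  also have "(\<Sum>j\<in>{m..<2*m}. f j) = (\<Sum>j<m. f (j + m))"
  proof -
    have "{m..<2*m} = (\<lambda>j. j + m) ` {..<m}"
    proof
      show "{m..<2*m} \<subseteq> (\<lambda>j. j + m) ` {..<m}"
      proof
        fix x assume "x \<in> {m..<2*m}"
        hence "x = (x - m) + m" "x - m < m" by auto
        thus "x \<in> (\<lambda>j. j + m) ` {..<m}" by blast
      qed
    qed auto
    thus ?thesis by (simp add: sum.reindex inj_on_def)
  qed
  finally show ?thesis .
qed

lemma bit_low: assumes "k < N" shows "((j + 2^N) div 2^k) mod 2 = (j div 2^k) mod (2::nat)"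
proof -
  obtain q where q: "N = k + Suc q" using assms less_iff_Suc_add by auto
  have "(2::nat)^N = 2^k * (2 * 2^q)" unfolding q by (simp add: power_add)
  hence "(j + 2^N) div 2^k = j div 2^k + 2 * 2^q"
    by (simp add: div_mult_self2 mult.commute)
  thus ?thesis by simp
qed

lemma bit_top0: "j < 2^N \<Longrightarrow> (j div 2^N) mod 2 = (0::nat)" by simp
lemma bit_top1: "j < 2^N \<Longrightarrow> ((j + 2^N) div 2^N) mod 2 = (1::nat)"
  by (simp add: div_add_self2)

lemma prod_bits:
  fixes g :: "nat \<Rightarrow> complex"
  shows "(\<Sum>j<2^N. \<Prod>k<N. g ((j div 2^k) mod 2)) = (g 0 + g 1)^N"
proof (induction N)
  case 0 thus ?case by simp
next
  case (Suc N)
  have "(\<Sum>j<2^Suc N. \<Prod>k<Suc N. g ((j div 2^k) mod 2)) =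
     (\<Sum>j<2^N. \<Prod>k<Suc N. g ((j div 2^k) mod 2)) + (\<Sum>j<2^N. \<Prod>k<Suc N. g (((j + 2^N) div 2^k) mod 2))"
    by (subst power_Suc, rule sum_double)
  also have "(\<Sum>j<2^N. \<Prod>k<Suc N. g ((j div 2^k) mod 2)) = (\<Sum>j<2^N. \<Prod>k<N. g ((j div 2^k) mod 2)) * g 0"
    by (simp add: sum_distrib_right)
  also have "(\<Sum>j<2^N. \<Prod>k<Suc N. g (((j + 2^N) div 2^k) mod 2)) = (\<Sum>j<2^N. \<Prod>k<N. g ((j div 2^k) mod 2)) * g 1"
  proof -
    have "(\<Prod>k<N. g (((j + 2^N) div 2^k) mod 2)) = (\<Prod>k<N. g ((j div 2^k) mod 2))" for j
      by (rule prod.cong) (auto simp: bit_low)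
    thus ?thesis by (simp add: sum_distrib_right div_add_self2)
  qed
  finally show ?case using Suc by (simp add: algebra_simps)
qed

lemma tensor_carr: "tensor_pow v N \<in> carrier_vec (2^N)" by (simp add: tensor_pow_def)

lemma tensor_ip: assumes "v \<in> carrier_vec 2" "w \<in> carrier_vec 2"
  shows "ip (tensor_pow v N) (tensor_pow w N) = (ip v w)^N"
proof -
  have "ip (tensor_pow v N) (tensor_pow w N) = (\<Sum>j<2^N. \<Prod>k<N. (\<lambda>b. cnj (v$b) * w$b) ((j div 2^k) mod 2))"
    by (simp add: ip_sum[of _ "2^N"] tensor_pow_def prod.distrib)
  also have "\<dots> = (cnj (v$0) * w$0 + cnj (v$1) * w$1)^N" by (rule prod_bits)
  also have "cnj (v$0) * w$0 + cnj (v$1) * w$1 = ip v w"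
    using assms by (simp add: ip_sum[of _ 2] numeral_2_eq_2 lessThan_Suc)
  finally show ?thesis .
qed


definition "omN N = cis (2 * pi / real N)"

lemma Umat_carr: "Umat N \<in> carrier_mat 2 2"
  by (simp add: Umat_def mat_of_rows_list_def numeral_2_eq_2)

lemma Umat_idx:
  "Umat N $$ (0,0) = - omN N / 2" "Umat N $$ (0,1) = omN N * of_real (sqrt 3) / 2"
  "Umat N $$ (1,0) = - omN N * of_real (sqrt 3) / 2" "Umat N $$ (1,1) = - omN N / 2"
  "Umat N $$ (0,Suc 0) = omN N * of_real (sqrt 3) / 2"
  "Umat N $$ (Suc 0,0) = - omN N * of_real (sqrt 3) / 2" "Umat N $$ (Suc 0,Suc 0) = - omN N / 2"
  by (simp_all add: Umat_def mat_of_rows_list_def omN_def)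

lemma mv2: assumes "A \<in> carrier_mat 2 2" "x \<in> carrier_vec 2"
  shows "(A *\<^sub>v x) $ 0 = A $$ (0,0) * x$0 + A $$ (0,1) * x$1"
        "(A *\<^sub>v x) $ 1 = A $$ (1,0) * x$0 + A $$ (1,1) * x$1"
        "(A *\<^sub>v x) $ Suc 0 = A $$ (Suc 0,0) * x$0 + A $$ (Suc 0,Suc 0) * x$Suc 0"
  using assms by (auto simp: scalar_prod_def row_def numeral_2_eq_2)

definition "v0 N = ket0"
definition "v1 N = Umat N *\<^sub>v ket0"
definition "v2 N = Umat N *\<^sub>v (Umat N *\<^sub>v ket0)"

lemma ket0_carr: "ket0 \<in> carrier_vec 2" by (simp add: ket0_def)
lemma ket0_idx: "ket0 $ 0 = 1" "ket0 $ 1 = 0" "ket0 $ Suc 0 = 0" by (simp_all add: ket0_def)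

lemma v_carr: "v0 N \<in> carrier_vec 2" "v1 N \<in> carrier_vec 2" "v2 N \<in> carrier_vec 2"
  unfolding v0_def v1_def v2_def
  by (intro ket0_carr mult_mat_vec_carrier[OF Umat_carr])+

lemma v_idx:
  "v0 N $ 0 = 1" "v0 N $ 1 = 0"
  "v1 N $ 0 = - omN N / 2" "v1 N $ 1 = - omN N * of_real (sqrt 3) / 2"
  "v2 N $ 0 = - omN N * omN N / 2" "v2 N $ 1 = omN N * omN N * of_real (sqrt 3) / 2"
proof -
  have s3: "complex_of_real (sqrt 3) * complex_of_real (sqrt 3) = 3"
    using of_real_mult[of "sqrt 3" "sqrt 3"] by simp
  show "v0 N $ 0 = 1" "v0 N $ 1 = 0" by (simp_all add: v0_def ket0_idx)
  show a: "v1 N $ 0 = - omN N / 2" "v1 N $ 1 = - omN N * of_real (sqrt 3) / 2"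
    unfolding v1_def using Umat_carr ket0_carr by (simp_all add: mv2 Umat_idx ket0_idx)
  have "v2 N = Umat N *\<^sub>v v1 N" by (simp add: v1_def v2_def)
  thus "v2 N $ 0 = - omN N * omN N / 2" "v2 N $ 1 = omN N * omN N * of_real (sqrt 3) / 2"
    using Umat_carr v_carr(2)[of N] a s3
    by (simp_all add: mv2 Umat_idx field_simps, simp_all add: algebra_simps)
qed


definition "uv a b = vec 2 (\<lambda>i. if i = 0 then complex_of_real a else complex_of_real b)"

lemma uv_carr: "uv a b \<in> carrier_vec 2" by (simp add: uv_def)

lemma ip_uv: "ip (uv a b) (uv a' b') = complex_of_real (a*a' + b*b')"
  by (simp add: ip_sum[of _ 2] uv_def numeral_2_eq_2 lessThan_Suc)

lemma v_scaled:
  "v0 N = uv 1 0" "v1 N = (- omN N) \<cdot>\<^sub>v uv (1/2) (sqrt 3 / 2)"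
  "v2 N = (omN N * omN N) \<cdot>\<^sub>v uv (-1/2) (sqrt 3 / 2)"
  using v_carr[of N] v_idx[of N]
  by (auto intro!: eq_vecI simp: uv_def less_2_cases_iff)

lemma omN_pow: "N > 0 \<Longrightarrow> omN N ^ N = 1"
  unfolding omN_def DeMoivre by simp

lemma cnj_omN_pow: "N > 0 \<Longrightarrow> cnj (omN N) ^ N = 1"
  using omN_pow by (metis complex_cnj_one complex_cnj_power)


lemma psi_eq: "psi N 0 = tensor_pow (v0 N) N" "psi N 1 = tensor_pow (v1 N) N" "psi N 2 = tensor_pow (v2 N) N"
  "psi N (Suc 0) = tensor_pow (v1 N) N"
  using Umat_carr[of N] ket0_carr
  by (simp_all add: psi_def v0_def v1_def v2_def numeral_2_eq_2)

lemma pw: assumes "X^N = (1::complex)" shows "(-(X/2))^N = (-(1/2))^N"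
proof -
  have "-(X/2) = X * (-(1/2))" by simp
  hence "(-(X/2))^N = X^N * (-(1/2))^N" by (simp only: power_mult_distrib)
  thus ?thesis using assms by simp
qed

lemma vv: assumes "N > 0" shows
  "(ip (v0 N) (v0 N))^N = 1" "(ip (v1 N) (v1 N))^N = 1" "(ip (v2 N) (v2 N))^N = 1"
  "(ip (v0 N) (v1 N))^N = of_real ((-1/2)^N)" "(ip (v1 N) (v0 N))^N = of_real ((-1/2)^N)"
  "(ip (v0 N) (v2 N))^N = of_real ((-1/2)^N)" "(ip (v2 N) (v0 N))^N = of_real ((-1/2)^N)"
  "(ip (v1 N) (v2 N))^N = of_real ((-1/2)^N)" "(ip (v2 N) (v1 N))^N = of_real ((-1/2)^N)"
  unfolding v_scaled using uv_carr assms
  apply (simp_all add: ip_lin[of _ 2] ip_uv power_mult_distrib omN_pow cnj_omN_pow)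
  apply (rule pw, simp add: power_mult_distrib omN_pow cnj_omN_pow)+
  done


lemma gram_inst: assumes N: "N \<ge> 2"
  shows "gram3 (2^N) (psi N 0) (psi N 1) (psi N 2) ((-1/2)^N)"
proof -
  have N0: "N > 0" using N by simp
  have ab: "\<bar>(-1/2::real)^N\<bar> \<le> 1/4"
  proof -
    have "\<bar>(-1/2::real)^N\<bar> = (1/2)^N" by (simp add: power_abs)
    also have "\<dots> \<le> (1/2)^2" by (rule power_decreasing[OF N]) auto
    finally show ?thesis by (simp add: power2_eq_square)
  qed
  have r: "-1/2 < (-1/2::real)^N" "(-1/2::real)^N < 1" using ab unfolding abs_le_iff by linarith+
  show ?thesis
    apply unfold_locales
    using tensor_carr vv[OF N0] v_carr[of N] r
    by (simp_all add: psi_eq tensor_ip abs_le_iff)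
qed

lemma opt_eq: assumes N: "N \<ge> 2"
  shows "opt_success N (\<lambda>_. 1/3) (psi N) =
    (sqrt (1 + 2*(-1/2)^N) + 2 * sqrt (1 - (-1/2)^N))^2 / 9"
proof -
  interpret gram3 "2^N" "psi N 0" "psi N 1" "psi N 2" "(-1/2)^N" by (rule gram_inst[OF N])
  have "opt_success N (\<lambda>_. 1/3) (psi N) = (AA + 2*BB)^2/9"
    unfolding opt_success_def
  proof (rule cSup_eq_maximum)
    show "(AA + 2*BB)^2/9 \<in> (\<lambda>M. success (\<lambda>_. 1/3) (psi N) M) ` {M. povm3 (2^N) M}"
      using Mopt_povm Mopt_success[of "psi N"] by force
    show "\<And>x. x \<in> (\<lambda>M. success (\<lambda>_. 1/3) (psi N) M) ` {M. povm3 (2^N) M} \<Longrightarrow> x \<le> (AA + 2*BB)^2/9"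
      using upper[of _ "psi N"] by auto
  qed
  moreover have "AA = sqrt (1 + 2*(-1/2)^N)" "BB = sqrt (1 - (-1/2)^N)" by (simp_all only: AA_def BB_def)
  ultimately show ?thesis by simp
qed


lemma sqrt_sq_mult: "a \<ge> 0 \<Longrightarrow> sqrt (a^2 * y) = a * sqrt y"
  by (simp add: real_sqrt_mult)

theorem mainTheorem12:
  fixes f :: "nat \<Rightarrow> real" and \<alpha> :: "nat \<Rightarrow> real"
  defines "\<alpha> \<equiv> \<lambda>N. (1 - (- 1 / 2) ^ (N - 1)) / 3"
  defines "f \<equiv> \<lambda>N. (sqrt (2/3) * sqrt (1 - \<alpha> N) + sqrt (1/3) * sqrt (\<alpha> N))\<^sup>2"
  shows "(\<forall>N\<ge>2. opt_success N (\<lambda>_. 1/3) (psi N) = f N) \<and> f \<longlonglongrightarrow> 1"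
proof
  have a: "\<alpha> N = (1 + 2*(-1/2)^N)/3" if N1: "N \<ge> 1" for N
  proof -
    obtain m where m: "N = Suc m" using N1 by (cases N) auto
    show ?thesis unfolding \<alpha>_def m by simp
  qed
  show "\<forall>N\<ge>2. opt_success N (\<lambda>_. 1/3) (psi N) = f N"
  proof (intro allI impI)
    fix N :: nat assume N: "N \<ge> 2"
    define x :: real where "x = (-1/2)^N"
    have ax: "\<alpha> N = (1 + 2*x)/3" using a[of N] N by (simp add: x_def)
    have e1: "sqrt (2/3) * sqrt (1 - \<alpha> N) = 2/3 * sqrt (1 - x)"
    proof -
      have "sqrt (2/3) * sqrt (1 - \<alpha> N) = sqrt ((2/3)^2 * (1 - x))"
        unfolding ax real_sqrt_mult[symmetric] by (simp add: power2_eq_square field_simps)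
      thus ?thesis by (simp add: sqrt_sq_mult)
    qed
    have e2: "sqrt (1/3) * sqrt (\<alpha> N) = 1/3 * sqrt (1 + 2*x)"
    proof -
      have "sqrt (1/3) * sqrt (\<alpha> N) = sqrt ((1/3)^2 * (1 + 2*x))"
        unfolding ax real_sqrt_mult[symmetric] by (simp add: power2_eq_square field_simps)
      thus ?thesis by (simp add: sqrt_sq_mult)
    qed
    have gen: "(2/3 * B + 1/3 * A)^2 = (A + 2*B)^2/(9::real)" for A B
      by (simp add: power2_eq_square field_simps)
    have "f N = (sqrt (2/3) * sqrt (1 - \<alpha> N) + sqrt (1/3) * sqrt (\<alpha> N))\<^sup>2"
      unfolding f_def by (rule refl)
    also have "\<dots> = (sqrt (1 + 2*x) + 2 * sqrt (1 - x))^2 / 9"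
      unfolding e1 e2 by (rule gen)
    finally have "f N = (sqrt (1 + 2*x) + 2 * sqrt (1 - x))^2 / 9" .
    thus "opt_success N (\<lambda>_. 1/3) (psi N) = f N" using opt_eq[OF N] by (simp add: x_def)
  qed
  show "f \<longlonglongrightarrow> 1"
  proof -
    have z: "(\<lambda>N. (-1/2::real)^N) \<longlonglongrightarrow> 0" by (rule LIMSEQ_power_zero) simp
    have "(\<lambda>N. \<alpha> (Suc N)) \<longlonglongrightarrow> (1 + 2*0)/3"
    proof -
      have "(\<lambda>N. \<alpha> (Suc N)) = (\<lambda>N. (1 + 2*(-1/2)^(Suc N))/3)" using a by auto
      moreover have "(\<lambda>N. (1 + 2*(-1/2::real)^(Suc N))/3) \<longlonglongrightarrow> (1 + 2*0)/3"
        using z[THEN LIMSEQ_Suc] by (intro tendsto_intros) auto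
      ultimately show ?thesis by simp
    qed
    hence al: "\<alpha> \<longlonglongrightarrow> 1/3" using LIMSEQ_imp_Suc by simp
    have "f \<longlonglongrightarrow> (sqrt (2/3) * sqrt (1 - 1/3) + sqrt (1/3) * sqrt (1/3))\<^sup>2"
      unfolding f_def by (intro tendsto_intros al)
    moreover have "(sqrt (2/3) * sqrt (1 - 1/3) + sqrt (1/3) * sqrt (1/3::real))\<^sup>2 = 1"
      by (simp add: real_sqrt_mult[symmetric])
    ultimately show ?thesis by simp
  qed
qed


end
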